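(* For $n\ge 2$ let $D_n(t)=\sum_{\pi\in\mathfrak{D}_n}t^{\mathrm{des}(\pi)}=\sum_{k\ge1}d_{n,k}t^k$. Then for $n\geq 3$, $$D_n(t)=(-1)^nt^{n-1}+(1+(n-1)t)D_{n-1}(t)+t(1-t)D'_{n-1}(t).$$ Equivalently, $d_{n,n-1}=1$ if $n$ is even, $d_{n,n-1}=0$ if $n$ is odd, and $d_{n,k}=(k+1)d_{n-1,k}+(n-k)d_{n-1,k-1}$ if $k\neq n-1$.
   Context: $\mathfrak{D}_n$ is the set of derangements (fixed-point-free permutations) of $[n]$, and $\mathrm{des}(\pi)=\#\{i\in[n-1]:\pi_i>\pi_{i+1}\}$. $D'_{n-1}$ denotes the derivative in $t$. *)

theory Defs
  imports "HOL-Combinatorics.Permutations" "HOL-Computational_Algebra.Polynomial"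
begin

definition derangements :: "nat \<Rightarrow> (nat \<Rightarrow> nat) set" where
  "derangements n = {p. p permutes {1..n} \<and> (\<forall>i\<in>{1..n}. p i \<noteq> i)}"

definition des :: "nat \<Rightarrow> (nat \<Rightarrow> nat) \<Rightarrow> nat" where
  "des n p = card {i \<in> {1..n-1}. p i > p (Suc i)}"

definition Dpoly :: "nat \<Rightarrow> int poly" where
  "Dpoly n = (\<Sum>p\<in>derangements n. monom 1 (des n p))"

end

theory Submission
  imports Defs "HOL-Computational_Algebra.Formal_Power_Series"
begin

definition sh :: "nat \<Rightarrow> nat \<Rightarrow> nat" where "sh v u = (if u < v then u else Suc u)"
definition ush :: "nat \<Rightarrow> nat \<Rightarrow> nat" where "ush v u = (if u < v then u else u - 1)"

lemma ush_sh [simp]: "ush v (sh v u) = u" by (simp add: sh_def ush_def)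
lemma sh_ush: "u \<noteq> v \<Longrightarrow> sh v (ush v u) = u" by (auto simp: sh_def ush_def)
lemma sh_neq [simp]: "sh v u \<noteq> v" by (simp add: sh_def)
lemma sh_neq' [simp]: "v \<noteq> sh v u" by (simp add: sh_def)
lemma sh_less_iff [simp]: "sh v a < sh v b \<longleftrightarrow> a < b" by (auto simp: sh_def)
lemma sh_eq_iff [simp]: "sh v a = sh v b \<longleftrightarrow> a = b" by (auto simp: sh_def)
lemma sh_less_v: "sh v a < v \<longleftrightarrow> a < v" by (auto simp: sh_def)
lemma v_less_sh: "v < sh v a \<longleftrightarrow> v \<le> a" by (auto simp: sh_def)
lemma ush_range: "1 \<le> x \<Longrightarrow> x \<le> Suc m \<Longrightarrow> x \<noteq> p \<Longrightarrow> p \<le> Suc m \<Longrightarrow> 1 \<le> p \<Longrightarrow> ush p x \<in> {1..m}"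
  by (auto simp: ush_def)
lemma sh_range: "u \<in> {1..m} \<Longrightarrow> sh v u \<in> {1..Suc m}" by (auto simp: sh_def)

definition ins :: "nat \<Rightarrow> (nat \<Rightarrow> nat) \<Rightarrow> nat \<Rightarrow> nat \<Rightarrow> nat \<Rightarrow> nat" where
  "ins m f p v x = (if x = p then v else if 1 \<le> x \<and> x \<le> Suc m then sh v (f (ush p x)) else x)"

definition del :: "nat \<Rightarrow> (nat \<Rightarrow> nat) \<Rightarrow> nat \<Rightarrow> nat \<Rightarrow> nat" where
  "del m g p x = (if 1 \<le> x \<and> x \<le> m then ush (g p) (g (sh p x)) else x)"

lemma ins_p [simp]: "ins m f p v p = v" by (simp add: ins_def)

lemma ins_other: "x \<noteq> p \<Longrightarrow> 1 \<le> x \<Longrightarrow> x \<le> Suc m \<Longrightarrow> ins m f p v x = sh v (f (ush p x))"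
  by (simp add: ins_def)

lemma ins_permutes:
  assumes f: "f permutes {1..m}" and p: "1 \<le> p" "p \<le> Suc m" and v: "1 \<le> v" "v \<le> Suc m"
  shows "ins m f p v permutes {1..Suc m}"
proof (rule inj_imp_permutes)
  have rng: "f (ush p x) \<in> {1..m}" if "x \<in> {1..Suc m}" "x \<noteq> p" for x
    using ush_range[of x m p] that p permutes_in_image[OF f] by auto
  show "inj_on (ins m f p v) {1..Suc m}"
  proof (rule inj_onI)
    fix x y assume x: "x \<in> {1..Suc m}" and y: "y \<in> {1..Suc m}" and e: "ins m f p v x = ins m f p v y"
    show "x = y"
    proof (cases "x = p")
      case True
      then show ?thesis using e y by (cases "y = p") (auto simp: ins_other)
    next
      case False
      show ?thesis
      proof (cases "y = p")
        case True
        then show ?thesis using e x False by (auto simp: ins_other)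
      next
        case False2: False
        then have "f (ush p x) = f (ush p y)" using e x y False by (simp add: ins_other)
        then have "ush p x = ush p y" using permutes_inj[OF f] by (simp add: inj_eq)
        then have "sh p (ush p x) = sh p (ush p y)" by simp
        then show ?thesis using False False2 by (simp add: sh_ush)
      qed
    qed
  qed
  show "finite {1..Suc m}" by simp
  show "ins m f p v x \<in> {1..Suc m}" if "x \<in> {1..Suc m}" for x
  proof (cases "x = p")
    case True then show ?thesis using v by simp
  next
    case False then show ?thesis using that sh_range[OF rng[OF that False], of v] by (simp add: ins_other)
  qed
  show "ins m f p v x = x" if "x \<notin> {1..Suc m}" for x
    using that p by (auto simp: ins_def)
qed

lemma del_permutes:
  assumes g: "g permutes {1..Suc m}" and p: "1 \<le> p" "p \<le> Suc m"
  shows "del m g p permutes {1..m}"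
proof (rule inj_imp_permutes)
  have gp: "g p \<in> {1..Suc m}" using permutes_in_image[OF g] p by auto
  have A: "sh p x \<in> {1..Suc m}" "sh p x \<noteq> p" if "x \<in> {1..m}" for x
    using sh_range[OF that] by auto
  have B: "g (sh p x) \<noteq> g p" if "x \<in> {1..m}" for x
    using A[OF that] permutes_inj[OF g] by (simp add: inj_eq)
  show "inj_on (del m g p) {1..m}"
  proof (rule inj_onI)
    fix x y assume x: "x \<in> {1..m}" and y: "y \<in> {1..m}" and e: "del m g p x = del m g p y"
    then have "ush (g p) (g (sh p x)) = ush (g p) (g (sh p y))" by (simp add: del_def)
    then have "g (sh p x) = g (sh p y)" using B[OF x] B[OF y] by (metis sh_ush)
    then have "sh p x = sh p y" using permutes_inj[OF g] by (simp add: inj_eq)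
    then show "x = y" by simp
  qed
  show "finite {1..m}" by simp
  show "del m g p x \<in> {1..m}" if "x \<in> {1..m}" for x
  proof -
    have "g (sh p x) \<in> {1..Suc m}" using A[OF that] permutes_in_image[OF g] by auto
    then show ?thesis using that B[OF that] gp ush_range[of "g (sh p x)" m "g p"] by (auto simp: del_def)
  qed
  show "del m g p x = x" if "x \<notin> {1..m}" for x
    using that by (auto simp: del_def)
qed

lemma ins_del:
  assumes g: "g permutes {1..Suc m}" and p: "1 \<le> p" "p \<le> Suc m"
  shows "ins m (del m g p) p (g p) = g"
proof
  fix x
  show "ins m (del m g p) p (g p) x = g x"
  proof (cases "x = p")
    case True then show ?thesis by simp
  next
    case False
    show ?thesis
    proof (cases "1 \<le> x \<and> x \<le> Suc m")
      case True
      have u: "ush p x \<in> {1..m}" using ush_range[of x m p] True False p by auto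
      have "g x \<noteq> g p" using False permutes_inj[OF g] by (simp add: inj_eq)
      then show ?thesis using True False u by (simp add: ins_other del_def sh_ush)
    next
      case F2: False
      then show ?thesis using permutes_not_in[OF g, of x] False by (auto simp: ins_def)
    qed
  qed
qed

lemma del_ins:
  assumes f: "f permutes {1..m}" and p: "1 \<le> p" "p \<le> Suc m"
  shows "del m (ins m f p v) p = f"
proof
  fix x
  show "del m (ins m f p v) p x = f x"
  proof (cases "1 \<le> x \<and> x \<le> m")
    case True
    have "sh p x \<in> {1..Suc m}" "sh p x \<noteq> p" using sh_range[of x m p] True by auto
    then show ?thesis using True by (simp add: del_def ins_other)
  next
    case False
    then show ?thesis using permutes_not_in[OF f, of x] by (auto simp: del_def)
  qed
qed

lemma ins_bij:
  assumes p: "1 \<le> p" "p \<le> Suc m" and v: "1 \<le> v" "v \<le> Suc m"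
  shows "bij_betw (\<lambda>f. ins m f p v) {f. f permutes {1..m}} {g. g permutes {1..Suc m} \<and> g p = v}"
proof (rule bij_betw_byWitness[where f'="\<lambda>g. del m g p"])
  show "\<forall>a\<in>{f. f permutes {1..m}}. del m (ins m a p v) p = a" using del_ins p by auto
  show "\<forall>a'\<in>{g. g permutes {1..Suc m} \<and> g p = v}. ins m (del m a' p) p v = a'"
    using ins_del p by auto
  show "(\<lambda>f. ins m f p v) ` {f. f permutes {1..m}} \<subseteq> {g. g permutes {1..Suc m} \<and> g p = v}"
    using ins_permutes p v by auto
  show "(\<lambda>g. del m g p) ` {g. g permutes {1..Suc m} \<and> g p = v} \<subseteq> {f. f permutes {1..m}}"
    using del_permutes p by auto
qed

definition fixc :: "nat \<Rightarrow> (nat \<Rightarrow> nat) \<Rightarrow> nat" where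
  "fixc n g = card {i \<in> {1..n}. g i = i}"

lemma fix_ins_set:
  assumes p: "1 \<le> p" "p \<le> Suc m"
  shows "{i \<in> {1..Suc m}. ins m f p p i = i} = insert p (sh p ` {i \<in> {1..m}. f i = i})"
proof (intro set_eqI iffI)
  fix i assume i: "i \<in> {i \<in> {1..Suc m}. ins m f p p i = i}"
  show "i \<in> insert p (sh p ` {i \<in> {1..m}. f i = i})"
  proof (cases "i = p")
    case True then show ?thesis by simp
  next
    case False
    have u: "ush p i \<in> {1..m}" using ush_range[of i m p] i False p by auto
    have "ins m f p p i = sh p (f (ush p i))" using i False by (intro ins_other) auto
    then have "sh p (f (ush p i)) = sh p (ush p i)" using i False by (simp add: sh_ush)
    then have "f (ush p i) = ush p i" by simp
    moreover have "i = sh p (ush p i)" using False by (simp add: sh_ush)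
    ultimately show ?thesis using u by blast
  qed
next
  fix i assume i: "i \<in> insert p (sh p ` {i \<in> {1..m}. f i = i})"
  show "i \<in> {i \<in> {1..Suc m}. ins m f p p i = i}"
  proof (cases "i = p")
    case True then show ?thesis using p by simp
  next
    case False
    then obtain j where j: "j \<in> {1..m}" "f j = j" "i = sh p j" using i by auto
    have "i \<in> {1..Suc m}" using j sh_range by auto
    then show ?thesis using j False by (simp add: ins_other)
  qed
qed

lemma fixc_ins:
  assumes p: "1 \<le> p" "p \<le> Suc m"
  shows "fixc (Suc m) (ins m f p p) = Suc (fixc m f)"
proof -
  have "card (insert p (sh p ` {i \<in> {1..m}. f i = i})) = Suc (card (sh p ` {i \<in> {1..m}. f i = i}))"
    by (rule card_insert_disjoint) auto
  also have "card (sh p ` {i \<in> {1..m}. f i = i}) = card {i \<in> {1..m}. f i = i}"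
    by (rule card_image) (auto simp: inj_on_def)
  finally show ?thesis unfolding fixc_def fix_ins_set[OF p] .
qed

definition Dsc :: "(nat \<Rightarrow> nat) \<Rightarrow> nat \<Rightarrow> nat" where
  "Dsc g i = (if g (Suc i) < g i then 1 else 0)"

lemma des_sum: "des n g = (\<Sum>i\<in>{1..<n}. Dsc g i)"
proof -
  have e: "{1..n-1} = {1..<n}" by auto
  have "card {i \<in> {1..<n}. g (Suc i) < g i} = (\<Sum>i\<in>{1..<n}. if g (Suc i) < g i then 1 else 0)"
    unfolding card_eq_sum by (rule sum.inter_filter) simp
  then show ?thesis unfolding des_def e Dsc_def by simp
qed

lemma Dsc_ins:
  assumes q: "q \<le> m" and i: "i \<in> {1..m}"
  shows "Dsc (ins m f (Suc q) v) i =
    (if Suc i \<le> q then Dsc f i else if i = q then (if v \<le> f q then 1 else 0)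
     else if i = Suc q then (if f (Suc q) < v then 1 else 0) else Dsc f (i - 1))"
proof -
  have val: "ins m f (Suc q) v j = (if j < Suc q then sh v (f j) else if j = Suc q then v else sh v (f (j - 1)))"
    if "j \<in> {1..Suc m}" for j
    using that by (auto simp: ins_def ush_def)
  have i1: "i \<in> {1..Suc m}" "Suc i \<in> {1..Suc m}" using i by auto
  show ?thesis
  proof (cases "Suc i \<le> q")
    case True
    have "ins m f (Suc q) v i = sh v (f i)" "ins m f (Suc q) v (Suc i) = sh v (f (Suc i))"
      using val[OF i1(1)] val[OF i1(2)] True by auto
    then show ?thesis using True unfolding Dsc_def by simp
  next
    case F1: False
    show ?thesis
    proof (cases "i = q")
      case True
      have "ins m f (Suc q) v i = sh v (f q)" "ins m f (Suc q) v (Suc i) = v"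
        using val[OF i1(1)] val[OF i1(2)] True by auto
      then show ?thesis using True unfolding Dsc_def by (simp add: v_less_sh)
    next
      case F2: False
      show ?thesis
      proof (cases "i = Suc q")
        case True
        have "ins m f (Suc q) v i = v" "ins m f (Suc q) v (Suc i) = sh v (f (Suc q))"
          using val[OF i1(1)] val[OF i1(2)] True by auto
        then show ?thesis using True F1 unfolding Dsc_def by (simp add: sh_less_v)
      next
        case F3: False
        then have gt: "i > Suc q" using F1 F2 by simp
        have "ins m f (Suc q) v i = sh v (f (i - 1))" "ins m f (Suc q) v (Suc i) = sh v (f i)"
          using val[OF i1(1)] val[OF i1(2)] gt by auto
        moreover have "Suc (i - 1) = i" using gt by simp
        ultimately show ?thesis using F1 F2 F3 unfolding Dsc_def by simp
      qed
    qed
  qed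
qed

lemma sum_shift_Dsc: "(\<Sum>i\<in>{Suc (Suc q)..m}. Dsc f (i - 1)) = (\<Sum>j\<in>{Suc q..<m}. Dsc f j)"
proof -
  have "(\<Sum>j\<in>{Suc q..<m}. Dsc f j) = (\<Sum>i\<in>Suc ` {Suc q..<m}. Dsc f (i - 1))"
    by (subst sum.reindex) auto
  also have "Suc ` {Suc q..<m} = {Suc (Suc q)..m}"
  proof (intro set_eqI iffI)
    fix x assume "x \<in> {Suc (Suc q)..m}"
    then have "x = Suc (x - 1)" "x - 1 \<in> {Suc q..<m}" by auto
    then show "x \<in> Suc ` {Suc q..<m}" by blast
  qed auto
  finally show ?thesis by simp
qed

lemma des_ins:
  assumes q: "q \<le> m"
  shows "des (Suc m) (ins m f (Suc q) v) + (if 1 \<le> q \<and> Suc q \<le> m \<and> f (Suc q) < f q then 1 else 0)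
       = des m f + (if 1 \<le> q \<and> v \<le> f q then 1 else 0) + (if Suc q \<le> m \<and> f (Suc q) < v then 1 else 0)"
proof -
  define Y where "Y = (if v \<le> f q then 1 else (0::nat))"
  define Z where "Z = (if f (Suc q) < v then 1 else (0::nat))"
  have e1: "{1..<Suc m} = {1..m}" by auto
  have "des (Suc m) (ins m f (Suc q) v) = (\<Sum>i\<in>{1..m}. Dsc (ins m f (Suc q) v) i)"
    unfolding des_sum by (simp only: e1)
  also have "\<dots> = (\<Sum>i\<in>{1..m}. (if i < q then Dsc f i else 0) + (if i = q then Y else 0)
       + (if i = Suc q then Z else 0) + (if Suc q < i then Dsc f (i - 1) else 0))"
    by (rule sum.cong) (auto simp: Dsc_ins[OF q] Y_def Z_def)
  also have "\<dots> = (\<Sum>i\<in>{1..m}. if i < q then Dsc f i else 0) + (\<Sum>i\<in>{1..m}. if i = q then Y else 0)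
       + (\<Sum>i\<in>{1..m}. if i = Suc q then Z else 0) + (\<Sum>i\<in>{1..m}. if Suc q < i then Dsc f (i - 1) else 0)"
    by (simp add: sum.distrib)
  also have "(\<Sum>i\<in>{1..m}. if i < q then Dsc f i else 0) = (\<Sum>i\<in>{1..<q}. Dsc f i)"
  proof -
    have "(\<Sum>i\<in>{1..m}. if i < q then Dsc f i else 0) = (\<Sum>i\<in>{i\<in>{1..m}. i < q}. Dsc f i)"
      by (rule sum.inter_filter[symmetric]) simp
    also have "{i\<in>{1..m}. i < q} = {1..<q}" using q by auto
    finally show ?thesis .
  qed
  also have "(\<Sum>i\<in>{1..m}. if i = q then Y else 0) = (if 1 \<le> q then Y else 0)"
    using q by (simp add: sum.delta)
  also have "(\<Sum>i\<in>{1..m}. if i = Suc q then Z else 0) = (if Suc q \<le> m then Z else 0)"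
    by (simp add: sum.delta)
  also have "(\<Sum>i\<in>{1..m}. if Suc q < i then Dsc f (i - 1) else 0) = (\<Sum>j\<in>{Suc q..<m}. Dsc f j)"
  proof -
    have "(\<Sum>i\<in>{1..m}. if Suc q < i then Dsc f (i - 1) else 0) = (\<Sum>i\<in>{i\<in>{1..m}. Suc q < i}. Dsc f (i - 1))"
      by (rule sum.inter_filter[symmetric]) simp
    also have "{i\<in>{1..m}. Suc q < i} = {Suc (Suc q)..m}" by auto
    finally show ?thesis using sum_shift_Dsc by simp
  qed
  finally have L: "des (Suc m) (ins m f (Suc q) v) = (\<Sum>i\<in>{1..<q}. Dsc f i) + (if 1 \<le> q then Y else 0)
      + (if Suc q \<le> m then Z else 0) + (\<Sum>j\<in>{Suc q..<m}. Dsc f j)" .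
  have "des m f = (\<Sum>i\<in>{1..<m}. (if i < q then Dsc f i else 0) + (if i = q then Dsc f q else 0)
       + (if q < i then Dsc f i else 0))"
    by (simp add: des_sum) (rule sum.cong, auto)
  also have "\<dots> = (\<Sum>i\<in>{1..<m}. if i < q then Dsc f i else 0) + (\<Sum>i\<in>{1..<m}. if i = q then Dsc f q else 0)
       + (\<Sum>i\<in>{1..<m}. if q < i then Dsc f i else 0)"
    by (simp add: sum.distrib)
  also have "(\<Sum>i\<in>{1..<m}. if i < q then Dsc f i else 0) = (\<Sum>i\<in>{1..<q}. Dsc f i)"
  proof -
    have "(\<Sum>i\<in>{1..<m}. if i < q then Dsc f i else 0) = (\<Sum>i\<in>{i\<in>{1..<m}. i < q}. Dsc f i)"
      by (rule sum.inter_filter[symmetric]) simp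
    also have "{i\<in>{1..<m}. i < q} = {1..<q}" using q by auto
    finally show ?thesis .
  qed
  also have "(\<Sum>i\<in>{1..<m}. if i = q then Dsc f q else 0) = (if 1 \<le> q \<and> q < m then Dsc f q else 0)"
    by (simp add: sum.delta)
  also have "(\<Sum>i\<in>{1..<m}. if q < i then Dsc f i else 0) = (\<Sum>j\<in>{Suc q..<m}. Dsc f j)"
  proof -
    have "(\<Sum>i\<in>{1..<m}. if q < i then Dsc f i else 0) = (\<Sum>i\<in>{i\<in>{1..<m}. q < i}. Dsc f i)"
      by (rule sum.inter_filter[symmetric]) simp
    also have "{i\<in>{1..<m}. q < i} = {Suc q..<m}" by auto
    finally show ?thesis .
  qed
  finally have R: "des m f = (\<Sum>i\<in>{1..<q}. Dsc f i) + (if 1 \<le> q \<and> q < m then Dsc f q else 0)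
      + (\<Sum>j\<in>{Suc q..<m}. Dsc f j)" .
  show ?thesis unfolding L R Y_def Z_def Dsc_def by auto
qed

lemma des_ins_bounds:
  assumes q: "q \<le> m"
  shows "des m f \<le> des (Suc m) (ins m f (Suc q) v) \<and> des (Suc m) (ins m f (Suc q) v) \<le> Suc (des m f)"
  using des_ins[OF q, of f v] by (auto split: if_splits)

lemma des_le: "des n g \<le> n - 1"
proof -
  have "des n g \<le> card {1..n-1}" unfolding des_def by (rule card_mono) auto
  then show ?thesis by simp
qed

lemma sum_X: "(\<Sum>q\<in>{0..m}. (if 1 \<le> q \<and> Suc q \<le> m \<and> f (Suc q) < f q then 1 else 0)) = des m f"
proof -
  have "(\<Sum>q\<in>{0..m}. (if 1 \<le> q \<and> Suc q \<le> m \<and> f (Suc q) < f q then 1 else 0))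
      = (\<Sum>q\<in>{0..m}. if q \<in> {1..<m} then Dsc f q else 0)"
    by (rule sum.cong) (auto simp: Dsc_def)
  also have "\<dots> = sum (Dsc f) ({0..m} \<inter> {1..<m})" by (rule sum.inter_restrict[symmetric]) simp
  also have "{0..m} \<inter> {1..<m} = {1..<m}" by auto
  finally show ?thesis by (simp add: des_sum)
qed

lemma sum_trichotomy:
  "(\<Sum>i\<in>{1..m}. (if i < f i then 1 else 0) + (if f i < i then 1 else 0) + (if f i = i then 1 else 0)) = (m::nat)"
proof -
  have "(\<Sum>i\<in>{1..m}. (if i < f i then 1 else 0) + (if f i < i then 1 else 0) + (if f i = i then 1 else (0::nat)))
      = (\<Sum>i\<in>{1..m}. 1)"
    by (rule sum.cong) auto
  then show ?thesis by simp
qed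

lemma diag_des_sum:
  "(\<Sum>q\<in>{0..m}. des (Suc m) (ins m f (Suc q) (Suc q))) + des m f + fixc m f = Suc m * des m f + m"
proof -
  let ?X = "\<lambda>q. (if 1 \<le> q \<and> Suc q \<le> m \<and> f (Suc q) < f q then 1 else (0::nat))"
  let ?Y = "\<lambda>q. (if 1 \<le> q \<and> Suc q \<le> f q then 1 else (0::nat))"
  let ?Z = "\<lambda>q. (if Suc q \<le> m \<and> f (Suc q) < Suc q then 1 else (0::nat))"
  have e: "des (Suc m) (ins m f (Suc q) (Suc q)) + ?X q = des m f + ?Y q + ?Z q" if "q \<in> {0..m}" for q
    using des_ins[of q m f "Suc q"] that by simp
  have "(\<Sum>q\<in>{0..m}. des (Suc m) (ins m f (Suc q) (Suc q))) + des m f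
      = (\<Sum>q\<in>{0..m}. des (Suc m) (ins m f (Suc q) (Suc q)) + ?X q)"
    using sum_X[of m f] by (simp add: sum.distrib)
  also have "\<dots> = (\<Sum>q\<in>{0..m}. des m f + ?Y q + ?Z q)" by (rule sum.cong, rule refl, rule e, assumption)
  also have "\<dots> = Suc m * des m f + (\<Sum>q\<in>{0..m}. ?Y q) + (\<Sum>q\<in>{0..m}. ?Z q)"
    by (simp add: sum.distrib)
  also have "(\<Sum>q\<in>{0..m}. ?Y q) = (\<Sum>i\<in>{1..m}. if i < f i then 1 else 0)"
  proof -
    have "(\<Sum>q\<in>{0..m}. ?Y q) = (\<Sum>q\<in>{0..m}. if q \<in> {1..m} then (if q < f q then 1 else 0) else 0)"
      by (rule sum.cong) auto
    also have "\<dots> = (\<Sum>q\<in>{0..m} \<inter> {1..m}. if q < f q then 1 else 0)"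
      by (rule sum.inter_restrict[symmetric]) simp
    also have "{0..m} \<inter> {1..m} = {1..m}" by auto
    finally show ?thesis by simp
  qed
  also have "(\<Sum>q\<in>{0..m}. ?Z q) = (\<Sum>i\<in>{1..m}. if f i < i then 1 else 0)"
  proof -
    have "(\<Sum>q\<in>{0..m}. ?Z q) = (\<Sum>q\<in>{0..<m}. if f (Suc q) < Suc q then 1 else 0)"
      by (rule sum.mono_neutral_cong_right) auto
    also have "\<dots> = (\<Sum>i\<in>Suc ` {0..<m}. if f i < i then 1 else 0)"
      by (rule sym, rule sum.reindex_cong[where l=Suc]) auto
    also have "Suc ` {0..<m} = {1..m}" by (auto simp: image_iff)
    finally show ?thesis .
  qed
  finally have A: "(\<Sum>q\<in>{0..m}. des (Suc m) (ins m f (Suc q) (Suc q))) + des m f =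
    Suc m * des m f + (\<Sum>i\<in>{1..m}. if i < f i then 1 else 0) + (\<Sum>i\<in>{1..m}. if f i < i then 1 else 0)" .
  have B: "fixc m f = (\<Sum>i\<in>{1..m}. if f i = i then 1 else 0)"
    unfolding fixc_def card_eq_sum by (rule sum.inter_filter) simp
  show ?thesis using A B sum_trichotomy[where m=m and f=f] by (simp add: sum.distrib)
qed

lemma max_des_sum:
  assumes f: "f permutes {1..m}"
  shows "(\<Sum>q\<in>{0..m}. des (Suc m) (ins m f (Suc q) (Suc m))) + des m f = Suc m * des m f + m"
proof -
  let ?X = "\<lambda>q. (if 1 \<le> q \<and> Suc q \<le> m \<and> f (Suc q) < f q then 1 else (0::nat))"
  have fr: "f i \<le> m" if "1 \<le> i" "i \<le> m" for i
    using permutes_in_image[OF f, of i] that by auto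
  have e: "des (Suc m) (ins m f (Suc q) (Suc m)) + ?X q = des m f + (if Suc q \<le> m then 1 else 0)"
    if "q \<in> {0..m}" for q
  proof -
    have "\<not> (1 \<le> q \<and> Suc m \<le> f q)" using fr[of q] that by auto
    moreover have "Suc q \<le> m \<Longrightarrow> f (Suc q) < Suc m" using fr[of "Suc q"] by auto
    ultimately show ?thesis using des_ins[of q m f "Suc m"] that by auto
  qed
  have "(\<Sum>q\<in>{0..m}. des (Suc m) (ins m f (Suc q) (Suc m))) + des m f
      = (\<Sum>q\<in>{0..m}. des (Suc m) (ins m f (Suc q) (Suc m)) + ?X q)"
    using sum_X[of m f] by (simp add: sum.distrib)
  also have "\<dots> = (\<Sum>q\<in>{0..m}. des m f + (if Suc q \<le> m then 1 else 0))"
    by (rule sum.cong, rule refl, rule e, assumption)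
  also have "\<dots> = Suc m * des m f + (\<Sum>q\<in>{0..m}. if Suc q \<le> m then 1 else 0)"
    by (simp add: sum.distrib)
  also have "(\<Sum>q\<in>{0..m}. if Suc q \<le> m then 1 else (0::nat)) = (\<Sum>q\<in>{0..<m}. 1)"
    by (rule sum.mono_neutral_cong_right) auto
  finally show ?thesis by simp
qed

definition w :: "nat \<Rightarrow> nat \<Rightarrow> (nat \<Rightarrow> nat) \<Rightarrow> nat" where
  "w n k g = (k + n - des n g) choose n"

lemma binom_key:
  assumes P: "finite P" "card P = Suc m" and b: "\<And>p. p \<in> P \<Longrightarrow> d \<le> e p \<and> e p \<le> Suc d" and d: "d \<le> m"
  shows "(\<Sum>p\<in>P. (k + Suc m - e p) choose Suc m) + (\<Sum>p\<in>P. e p - d) * ((k + m - d) choose m)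
       = (k + Suc m - d) * ((k + m - d) choose m)"
proof -
  have each: "((k + Suc m - e p) choose Suc m) + (e p - d) * ((k + m - d) choose m) = (k + Suc m - d) choose Suc m"
    if "p \<in> P" for p
  proof (cases "e p = d")
    case True then show ?thesis by simp
  next
    case False
    then have ep: "e p = Suc d" using b[OF that] by auto
    have "k + Suc m - d = Suc (k + m - d)" using d by simp
    moreover have "k + Suc m - e p = k + m - d" using ep d by simp
    ultimately show ?thesis using ep by simp
  qed
  have "(\<Sum>p\<in>P. (k + Suc m - e p) choose Suc m) + (\<Sum>p\<in>P. e p - d) * ((k + m - d) choose m)
      = (\<Sum>p\<in>P. ((k + Suc m - e p) choose Suc m) + (e p - d) * ((k + m - d) choose m))"
    by (simp add: sum.distrib sum_distrib_right)
  also have "\<dots> = (\<Sum>p\<in>P. (k + Suc m - d) choose Suc m)" by (rule sum.cong[OF refl each])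
  also have "\<dots> = Suc m * (Suc (k + m - d) choose Suc m)"
  proof -
    have "k + Suc m - d = Suc (k + m - d)" using d by simp
    then show ?thesis using P by (simp del: binomial_Suc_Suc)
  qed
  also have "\<dots> = Suc (k + m - d) * ((k + m - d) choose m)" by (rule Suc_times_binomial)
  also have "Suc (k + m - d) = k + Suc m - d" using d by simp
  finally show ?thesis .
qed

lemma sum_1_Suc: "(\<Sum>p\<in>{1..Suc m}. g p) = (\<Sum>q\<in>{0..m}. g (Suc q))"
  using sum.atLeast_Suc_atMost_Suc_shift[of g 0 m] by (simp add: o_def)

lemma weight_lemma:
  assumes b: "\<And>q. q \<le> m \<Longrightarrow> des m f \<le> e (Suc q) \<and> e (Suc q) \<le> Suc (des m f)"
    and s: "(\<Sum>q\<in>{0..m}. e (Suc q)) + des m f + c = Suc m * des m f + m"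
  shows "(\<Sum>p\<in>{1..Suc m}. (k + Suc m - e p) choose Suc m) = (k + 1 + c) * w m k f"
proof -
  let ?d = "des m f"
  have d: "?d \<le> m" using des_le[of m f] by simp
  have b': "?d \<le> e p \<and> e p \<le> Suc ?d" if "p \<in> {1..Suc m}" for p
    using b[of "p - 1"] that by (cases p) auto
  have K: "(\<Sum>p\<in>{1..Suc m}. (k + Suc m - e p) choose Suc m) + (\<Sum>p\<in>{1..Suc m}. e p - ?d) * w m k f
       = (k + Suc m - ?d) * w m k f"
    unfolding w_def by (rule binom_key) (use b' d in auto)
  have T: "(\<Sum>p\<in>{1..Suc m}. e p - ?d) + Suc m * ?d = (\<Sum>p\<in>{1..Suc m}. e p)"
  proof -
    have "(\<Sum>p\<in>{1..Suc m}. e p - ?d) + Suc m * ?d = (\<Sum>p\<in>{1..Suc m}. (e p - ?d) + ?d)"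
      by (simp add: sum.distrib)
    also have "\<dots> = (\<Sum>p\<in>{1..Suc m}. e p)" by (rule sum.cong) (use b' in auto)
    finally show ?thesis .
  qed
  have T2: "(\<Sum>p\<in>{1..Suc m}. e p - ?d) + ?d + c = m"
    using T s unfolding sum_1_Suc[of e m] by simp
  have "k + Suc m - ?d = (k + 1 + c) + (\<Sum>p\<in>{1..Suc m}. e p - ?d)" using T2 d by simp
  then show ?thesis using K by (simp add: distrib_right)
qed

lemma diag_w:
  "(\<Sum>p\<in>{1..Suc m}. w (Suc m) k (ins m f p p)) = (k + 1 + fixc m f) * w m k f"
  unfolding w_def[of "Suc m"]
  by (rule weight_lemma[folded w_def]) (use des_ins_bounds diag_des_sum in auto)

lemma max_w:
  assumes f: "f permutes {1..m}"
  shows "(\<Sum>p\<in>{1..Suc m}. w (Suc m) k (ins m f p (Suc m))) = (k + 1) * w m k f"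
proof -
  have "(\<Sum>p\<in>{1..Suc m}. w (Suc m) k (ins m f p (Suc m))) = (k + 1 + 0) * w m k f"
    unfolding w_def[of "Suc m"]
    by (rule weight_lemma[folded w_def]) (use des_ins_bounds max_des_sum[OF f] in auto)
  then show ?thesis by simp
qed

lemma swap_ins:
  assumes v: "\<And>p. p \<in> {1..Suc m} \<Longrightarrow> 1 \<le> v p \<and> v p \<le> Suc m"
  shows "(\<Sum>\<sigma>\<in>{\<sigma>. \<sigma> permutes {1..Suc m}}. \<Sum>p\<in>{1..Suc m}. if \<sigma> p = v p then g \<sigma> else 0)
       = (\<Sum>p\<in>{1..Suc m}. \<Sum>f\<in>{f. f permutes {1..m}}. g (ins m f p (v p)))"
proof -
  have "(\<Sum>\<sigma>\<in>{\<sigma>. \<sigma> permutes {1..Suc m}}. \<Sum>p\<in>{1..Suc m}. if \<sigma> p = v p then g \<sigma> else 0)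
      = (\<Sum>p\<in>{1..Suc m}. \<Sum>\<sigma>\<in>{\<sigma>. \<sigma> permutes {1..Suc m}}. if \<sigma> p = v p then g \<sigma> else 0)"
    by (rule sum.swap)
  also have "\<dots> = (\<Sum>p\<in>{1..Suc m}. \<Sum>f\<in>{f. f permutes {1..m}}. g (ins m f p (v p)))"
  proof (rule sum.cong[OF refl])
    fix p assume p: "p \<in> {1..Suc m}"
    have "(\<Sum>\<sigma>\<in>{\<sigma>. \<sigma> permutes {1..Suc m}}. if \<sigma> p = v p then g \<sigma> else 0)
        = (\<Sum>\<sigma>\<in>{\<sigma>\<in>{\<sigma>. \<sigma> permutes {1..Suc m}}. \<sigma> p = v p}. g \<sigma>)"
      by (rule sum.inter_filter[symmetric]) (simp add: finite_permutations)
    also have "{\<sigma>\<in>{\<sigma>. \<sigma> permutes {1..Suc m}}. \<sigma> p = v p} = {\<sigma>. \<sigma> permutes {1..Suc m} \<and> \<sigma> p = v p}"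
      by auto
    also have "(\<Sum>\<sigma>\<in>{\<sigma>. \<sigma> permutes {1..Suc m} \<and> \<sigma> p = v p}. g \<sigma>)
        = (\<Sum>f\<in>{f. f permutes {1..m}}. g (ins m f p (v p)))"
      using v[OF p] p by (intro sum.reindex_bij_betw[symmetric] ins_bij) auto
    finally show "(\<Sum>\<sigma>\<in>{\<sigma>. \<sigma> permutes {1..Suc m}}. if \<sigma> p = v p then g \<sigma> else 0)
        = (\<Sum>f\<in>{f. f permutes {1..m}}. g (ins m f p (v p)))" .
  qed
  finally show ?thesis .
qed

lemma worp_step:
  "(\<Sum>\<sigma>\<in>{\<sigma>. \<sigma> permutes {1..Suc m}}. w (Suc m) k \<sigma>) = (k + 1) * (\<Sum>f\<in>{f. f permutes {1..m}}. w m k f)"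
proof -
  have one: "(\<Sum>p\<in>{1..Suc m}. if \<sigma> p = Suc m then w (Suc m) k \<sigma> else 0) = w (Suc m) k \<sigma>"
    if s: "\<sigma> permutes {1..Suc m}" for \<sigma>
  proof -
    let ?x = "inv \<sigma> (Suc m)"
    have "?x \<in> {1..Suc m}" using permutes_in_image[OF permutes_inv[OF s], of "Suc m"] by simp
    moreover have "\<sigma> p = Suc m \<longleftrightarrow> p = ?x" for p using permutes_inv_eq[OF s] by metis
    ultimately show ?thesis by (simp add: sum.delta')
  qed
  have "(\<Sum>\<sigma>\<in>{\<sigma>. \<sigma> permutes {1..Suc m}}. w (Suc m) k \<sigma>)
      = (\<Sum>\<sigma>\<in>{\<sigma>. \<sigma> permutes {1..Suc m}}. \<Sum>p\<in>{1..Suc m}. if \<sigma> p = Suc m then w (Suc m) k \<sigma> else 0)"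
    by (rule sum.cong[OF refl], rule one[symmetric], simp)
  also have "\<dots> = (\<Sum>p\<in>{1..Suc m}. \<Sum>f\<in>{f. f permutes {1..m}}. w (Suc m) k (ins m f p (Suc m)))"
    by (rule swap_ins[where v="\<lambda>_. Suc m"]) simp
  also have "\<dots> = (\<Sum>f\<in>{f. f permutes {1..m}}. \<Sum>p\<in>{1..Suc m}. w (Suc m) k (ins m f p (Suc m)))"
    by (rule sum.swap)
  also have "\<dots> = (\<Sum>f\<in>{f. f permutes {1..m}}. (k + 1) * w m k f)"
    by (rule sum.cong[OF refl], rule max_w, simp)
  finally show ?thesis by (simp add: sum_distrib_left)
qed

lemma worpitzky: "(\<Sum>\<sigma>\<in>{\<sigma>. \<sigma> permutes {1..n}}. w n k \<sigma>) = (k + 1) ^ n"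
proof (induction n)
  case 0
  have "{\<sigma>. \<sigma> permutes {1..0::nat}} = {id}" by (auto simp: permutes_empty)
  then show ?case by (simp add: w_def)
next
  case (Suc n)
  then show ?case using worp_step[of n k] by simp
qed

definition acnt :: "nat \<Rightarrow> nat \<Rightarrow> nat \<Rightarrow> nat" where
  "acnt k n j = (\<Sum>\<sigma>\<in>{\<sigma>. \<sigma> permutes {1..n} \<and> fixc n \<sigma> = j}. w n k \<sigma>)"

lemma fixc_le: "fixc n g \<le> n"
proof -
  have "fixc n g \<le> card {1..n}" unfolding fixc_def by (rule card_mono) auto
  then show ?thesis by simp
qed

lemma acnt_sum: "(\<Sum>j\<in>{0..n}. acnt k n j) = (k + 1) ^ n"
proof -
  have "(\<Sum>j\<in>{0..n}. acnt k n j) = (\<Sum>j\<in>{0..n}. \<Sum>\<sigma>\<in>{\<sigma>. \<sigma> permutes {1..n}}. if fixc n \<sigma> = j then w n k \<sigma> else 0)"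
    unfolding acnt_def
    by (rule sum.cong[OF refl], subst sum.inter_filter[symmetric]) (auto simp: finite_permutations intro: sum.cong)
  also have "\<dots> = (\<Sum>\<sigma>\<in>{\<sigma>. \<sigma> permutes {1..n}}. \<Sum>j\<in>{0..n}. if fixc n \<sigma> = j then w n k \<sigma> else 0)"
    by (rule sum.swap)
  also have "\<dots> = (\<Sum>\<sigma>\<in>{\<sigma>. \<sigma> permutes {1..n}}. w n k \<sigma>)"
    by (rule sum.cong[OF refl]) (simp add: sum.delta' fixc_le)
  finally show ?thesis using worpitzky[of n k] by simp
qed

lemma acnt_step: "Suc j * acnt k (Suc m) (Suc j) = (k + 1 + j) * acnt k m j"
proof -
  have fc: "fixc n \<sigma> * c = (\<Sum>p\<in>{1..n}. if \<sigma> p = p then c else 0)" for n \<sigma> and c :: nat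
  proof -
    have "fixc n \<sigma> = (\<Sum>p\<in>{1..n}. if \<sigma> p = p then 1 else 0)"
      unfolding fixc_def card_eq_sum by (rule sum.inter_filter) simp
    then have "fixc n \<sigma> * c = (\<Sum>p\<in>{1..n}. (if \<sigma> p = p then 1 else 0) * c)"
      by (simp add: sum_distrib_right)
    also have "\<dots> = (\<Sum>p\<in>{1..n}. if \<sigma> p = p then c else 0)" by (rule sum.cong) auto
    finally show ?thesis .
  qed
  have "Suc j * acnt k (Suc m) (Suc j)
      = (\<Sum>\<sigma>\<in>{\<sigma>. \<sigma> permutes {1..Suc m}}. if fixc (Suc m) \<sigma> = Suc j then fixc (Suc m) \<sigma> * w (Suc m) k \<sigma> else 0)"
    unfolding acnt_def sum_distrib_left
    by (subst sum.inter_filter[symmetric]) (auto simp: finite_permutations intro: sum.cong)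
  also have "\<dots> = (\<Sum>\<sigma>\<in>{\<sigma>. \<sigma> permutes {1..Suc m}}. \<Sum>p\<in>{1..Suc m}. if \<sigma> p = p then (if fixc (Suc m) \<sigma> = Suc j then w (Suc m) k \<sigma> else 0) else 0)"
    by (rule sum.cong[OF refl], subst fc[symmetric], simp)
  also have "\<dots> = (\<Sum>p\<in>{1..Suc m}. \<Sum>f\<in>{f. f permutes {1..m}}. if fixc (Suc m) (ins m f p p) = Suc j then w (Suc m) k (ins m f p p) else 0)"
    by (rule swap_ins[where v="\<lambda>p. p"]) simp
  also have "\<dots> = (\<Sum>p\<in>{1..Suc m}. \<Sum>f\<in>{f. f permutes {1..m}}. if fixc m f = j then w (Suc m) k (ins m f p p) else 0)"
    by (intro sum.cong refl) (auto simp: fixc_ins)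
  also have "\<dots> = (\<Sum>f\<in>{f. f permutes {1..m}}. if fixc m f = j then (\<Sum>p\<in>{1..Suc m}. w (Suc m) k (ins m f p p)) else 0)"
    by (subst sum.swap) (simp add: if_distrib cong: if_cong)
  also have "\<dots> = (\<Sum>f\<in>{f. f permutes {1..m}}. if fixc m f = j then (k + 1 + j) * w m k f else 0)"
    by (rule sum.cong[OF refl], simp only: diag_w, simp)
  also have "\<dots> = (k + 1 + j) * acnt k m j"
    unfolding acnt_def sum_distrib_left
    by (subst sum.inter_filter[symmetric]) (auto simp: finite_permutations intro: sum.cong)
  finally show ?thesis .
qed

lemma acnt_j: "j \<le> n \<Longrightarrow> acnt k n j = ((k + j) choose j) * acnt k (n - j) 0"
proof (induction j arbitrary: n)
  case 0 then show ?case by simp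
next
  case (Suc j)
  then obtain m where n: "n = Suc m" and jm: "j \<le> m" by (cases n) auto
  have "Suc j * acnt k n (Suc j) = (k + 1 + j) * acnt k m j" using acnt_step n by simp
  also have "\<dots> = ((k + 1 + j) * ((k + j) choose j)) * acnt k (m - j) 0" by (simp only: Suc.IH[OF jm] mult.assoc)
  also have "(k + 1 + j) * ((k + j) choose j) = Suc j * ((k + Suc j) choose Suc j)"
    using Suc_times_binomial[of j "k + j"] by simp
  also have "\<dots> * acnt k (m - j) 0 = Suc j * (((k + Suc j) choose Suc j) * acnt k (n - Suc j) 0)"
    using n by (simp add: algebra_simps del: binomial_Suc_Suc)
  finally show ?case by (simp only: mult_left_cancel)
qed

lemma conv_c: "(\<Sum>j\<in>{0..n}. ((k + j) choose j) * acnt k (n - j) 0) = (k + 1) ^ n"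
proof -
  have "(\<Sum>j\<in>{0..n}. ((k + j) choose j) * acnt k (n - j) 0) = (\<Sum>j\<in>{0..n}. acnt k n j)"
    by (rule sum.cong[OF refl], rule acnt_j[symmetric], simp)
  then show ?thesis by (simp add: acnt_sum)
qed

lemma vand_rat:
  "(\<Sum>j\<in>{0..n}. (of_nat ((k + j) choose j) * (-1) ^ (n - j) * of_nat ((k + 1) choose (n - j)) :: rat))
     = (if n = 0 then 1 else 0)"
proof -
  let ?a = "- (of_nat k + 1) :: rat"
  let ?b = "of_nat k + 1 :: rat"
  have g1: "of_nat ((k + j) choose j) = (-1) ^ j * (?a gchoose j)" for j
  proof -
    have "?a gchoose j = (-1) ^ j * ((of_nat j - ?a - 1) gchoose j)" by (rule gbinomial_negated_upper)
    also have "of_nat j - ?a - 1 = of_nat (k + j)" by simp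
    also have "(of_nat (k + j) :: rat) gchoose j = of_nat ((k + j) choose j)" by (simp add: binomial_gbinomial)
    finally have "?a gchoose j = (-1) ^ j * of_nat ((k + j) choose j)" .
    then show ?thesis by simp
  qed
  have g2: "of_nat ((k + 1) choose i) = ?b gchoose i" for i
    using binomial_gbinomial[of "k + 1" i, where 'a=rat] by (simp only: of_nat_add of_nat_1)
  have "(\<Sum>j\<in>{0..n}. (of_nat ((k + j) choose j) * (-1) ^ (n - j) * of_nat ((k + 1) choose (n - j)) :: rat))
      = (\<Sum>j\<in>{0..n}. (-1) ^ n * ((?a gchoose j) * (?b gchoose (n - j))))"
  proof (rule sum.cong[OF refl])
    fix j assume j: "j \<in> {0..n}"
    have e: "(-1::rat) ^ j * (-1) ^ (n - j) = (-1) ^ n"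
      using j by (simp add: power_add[symmetric])
    show "of_nat ((k + j) choose j) * (-1) ^ (n - j) * of_nat ((k + 1) choose (n - j)) =
          (-1) ^ n * ((?a gchoose j) * (?b gchoose (n - j)))"
      unfolding g1 g2 e[symmetric] by (simp add: algebra_simps)
  qed
  also have "\<dots> = (-1) ^ n * ((?a + ?b) gchoose n)"
    by (simp add: sum_distrib_left[symmetric] gbinomial_Vandermonde)
  also have "\<dots> = (if n = 0 then 1 else 0)" by (simp add: gbinomial_0_left)
  finally show ?thesis .
qed

lemma vand_int:
  "(\<Sum>j\<in>{0..n}. int ((k + j) choose j) * (-1) ^ (n - j) * int ((k + 1) choose (n - j)))
     = (if n = 0 then 1 else 0)"
proof -
  have "of_int (\<Sum>j\<in>{0..n}. int ((k + j) choose j) * (-1) ^ (n - j) * int ((k + 1) choose (n - j)))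
      = (of_int (if n = 0 then 1 else 0) :: rat)"
    using vand_rat[of k n] by simp
  then show ?thesis by (simp only: of_int_eq_iff)
qed

lemma conv_unique:
  fixes x y :: "nat \<Rightarrow> int" and B :: "nat \<Rightarrow> int"
  assumes B0: "B 0 = 1" and eq: "\<And>n. (\<Sum>j\<in>{0..n}. B j * x (n - j)) = (\<Sum>j\<in>{0..n}. B j * y (n - j))"
  shows "x n = y n"
proof (induction n rule: less_induct)
  case (less n)
  have split: "(\<Sum>j\<in>{0..n}. B j * z (n - j)) = z n + (\<Sum>j\<in>{1..n}. B j * z (n - j))" for z :: "nat \<Rightarrow> int"
  proof -
    have "{0..n} = insert 0 {1..n}" by auto
    then show ?thesis using B0 by simp
  qed
  have "(\<Sum>j\<in>{1..n}. B j * x (n - j)) = (\<Sum>j\<in>{1..n}. B j * y (n - j))"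
    by (rule sum.cong) (auto intro!: less.IH)
  then show ?case using eq[of n] split[of x] split[of y] by simp
qed

lemma c_rec:
  assumes n: "1 \<le> n"
  shows "int (acnt k n 0) = int (k + 1) * int (acnt k (n - 1) 0) + (-1) ^ n * int ((k + 1) choose n)"
proof -
  define c where "c i = int (acnt k i 0)" for i
  define B where "B j = int ((k + j) choose j)" for j
  define e where "e i = (if i = 0 then c 0 else c i - int (k + 1) * c (i - 1))" for i
  define e' where "e' i = (-1) ^ i * int ((k + 1) choose i)" for i
  have conv: "(\<Sum>j\<in>{0..i}. B j * c (i - j)) = int (k + 1) ^ i" for i
  proof -
    have "(\<Sum>j\<in>{0..i}. B j * c (i - j)) = int (\<Sum>j\<in>{0..i}. ((k + j) choose j) * acnt k (i - j) 0)"
      unfolding B_def c_def by (simp add: of_nat_sum)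
    also have "\<dots> = int ((k + 1) ^ i)" by (simp only: conv_c)
    finally show ?thesis by simp
  qed
  have E: "(\<Sum>j\<in>{0..i}. B j * e (i - j)) = (if i = 0 then 1 else 0)" for i
  proof (cases i)
    case 0 then show ?thesis using conv[of 0] by (simp add: e_def)
  next
    case (Suc i')
    have "(\<Sum>j\<in>{0..i}. B j * e (i - j)) = (\<Sum>j\<in>{0..i}. B j * c (i - j) - (if j < i then int (k + 1) * (B j * c (i' - j)) else 0))"
    proof (rule sum.cong[OF refl])
      fix j assume j: "j \<in> {0..i}"
      show "B j * e (i - j) = B j * c (i - j) - (if j < i then int (k + 1) * (B j * c (i' - j)) else 0)"
      proof (cases "j < i")
        case True
        then have "i - j \<noteq> 0" "i - j - 1 = i' - j" using Suc by auto
        then have "e (i - j) = c (i - j) - int (k + 1) * c (i' - j)" unfolding e_def by simp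
        then show ?thesis using True by (simp add: right_diff_distrib)
      next
        case False
        then have "j = i" using j by simp
        then show ?thesis by (simp add: e_def)
      qed
    qed
    also have "\<dots> = (\<Sum>j\<in>{0..i}. B j * c (i - j)) - (\<Sum>j\<in>{0..i}. if j < i then int (k + 1) * (B j * c (i' - j)) else 0)"
      by (simp add: sum_subtractf)
    also have "(\<Sum>j\<in>{0..i}. if j < i then int (k + 1) * (B j * c (i' - j)) else 0) = (\<Sum>j\<in>{0..i'}. int (k + 1) * (B j * c (i' - j)))"
      by (rule sum.mono_neutral_cong_right) (auto simp: Suc)
    also have "\<dots> = int (k + 1) * int (k + 1) ^ i'" by (simp add: sum_distrib_left[symmetric] conv)
    finally show ?thesis using conv[of i] Suc by simp
  qed
  have E': "(\<Sum>j\<in>{0..i}. B j * e' (i - j)) = (if i = 0 then 1 else 0)" for i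
    using vand_int[where n=i and k=k] unfolding B_def e'_def by (simp only: mult.assoc)
  have eqs: "\<And>i. (\<Sum>j\<in>{0..i}. B j * e (i - j)) = (\<Sum>j\<in>{0..i}. B j * e' (i - j))"
    by (simp only: E E')
  have "e n = e' n" by (rule conv_unique[where B=B, OF _ eqs]) (simp add: B_def)
  moreover have "e n = c n - int (k + 1) * c (n - 1)" using n unfolding e_def by simp
  ultimately have X: "c n = int (k + 1) * c (n - 1) + e' n" by simp
  show ?thesis using X unfolding c_def e'_def .
qed

definition Tr :: "nat \<Rightarrow> nat \<Rightarrow> int poly \<Rightarrow> int" where
  "Tr n k P = (\<Sum>i\<in>{0..k}. coeff P i * int ((k + n - i) choose n))"

lemma Tr_add: "Tr n k (P + Q) = Tr n k P + Tr n k Q"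
  unfolding Tr_def by (simp add: sum.distrib algebra_simps)

lemma Tr_diff: "Tr n k (P - Q) = Tr n k P - Tr n k Q"
  unfolding Tr_def by (simp add: sum_subtractf algebra_simps)

lemma Tr_sum: "Tr n k (\<Sum>x\<in>A. f x) = (\<Sum>x\<in>A. Tr n k (f x))"
  unfolding Tr_def coeff_sum sum_distrib_right by (rule sum.swap)

lemma Tr_monom:
  assumes "d \<le> n"
  shows "Tr n k (monom c d) = c * int ((k + n - d) choose n)"
proof (cases "d \<le> k")
  case True
  have "Tr n k (monom c d) = (\<Sum>i\<in>{0..k}. if i = d then c * int ((k + n - i) choose n) else 0)"
    unfolding Tr_def by (rule sum.cong) auto
  also have "\<dots> = c * int ((k + n - d) choose n)" using True by (simp add: sum.delta')
  finally show ?thesis .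
next
  case False
  have "Tr n k (monom c d) = 0" unfolding Tr_def using False by (intro sum.neutral) auto
  moreover have "(k + n - d) choose n = 0" using False assms by (intro binomial_eq_0) simp
  ultimately show ?thesis by simp
qed

lemma Tr_zero:
  assumes "\<And>k. Tr n k Q = 0"
  shows "Q = 0"
proof -
  have "coeff Q k = 0" for k
  proof (induction k rule: less_induct)
    case (less k)
    have "{0..k} = insert k {0..<k}" by auto
    then have "Tr n k Q = coeff Q k * int ((k + n - k) choose n) + (\<Sum>i\<in>{0..<k}. coeff Q i * int ((k + n - i) choose n))"
      unfolding Tr_def by simp
    also have "(\<Sum>i\<in>{0..<k}. coeff Q i * int ((k + n - i) choose n)) = 0"
      by (rule sum.neutral) (auto simp: less.IH)
    finally show ?case using assms[of k] by simp
  qed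
  then show ?thesis by (intro poly_eqI) simp
qed

lemma bin_abs: "Suc n * ((a + n) choose Suc n) = a * ((a + n) choose n)"
proof (cases a)
  case 0 then show ?thesis by simp
next
  case (Suc a')
  have "Suc n * (Suc (a' + n) choose Suc n) = Suc (a' + n) * ((a' + n) choose n)"
    by (rule Suc_times_binomial)
  also have "\<dots> = (Suc (a' + n) - n) * (Suc (a' + n) choose n)"
    using binomial_absorb_comp[of "Suc (a' + n)" n] by simp
  finally show ?thesis using Suc by simp
qed

lemma bin_key2:
  assumes i: "i \<le> k"
  shows "int (i + 1) * int ((k + Suc n' - i) choose Suc n') + (int n' - int i) * int ((k + n' - i) choose Suc n')
       = int (k + 1) * int ((k + n' - i) choose n')"
proof -
  define a where "a = k - i"
  have N: "k + n' - i = a + n'" "k + Suc n' - i = Suc (a + n')" using i by (auto simp: a_def)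
  have ka: "k = a + i" using i by (simp add: a_def)
  have P: "(Suc (a + n') choose Suc n') = ((a + n') choose n') + ((a + n') choose Suc n')" by simp
  have A0: "Suc n' * ((a + n') choose Suc n') = a * ((a + n') choose n')" by (rule bin_abs)
  have A: "int (Suc n') * int ((a + n') choose Suc n') = int a * int ((a + n') choose n')"
    using arg_cong[OF A0, of int] by (simp only: of_nat_mult)
  show ?thesis unfolding N P ka using A by (simp add: algebra_simps)
qed

lemma coeff_E:
  fixes P :: "int poly" and c :: int
  shows "coeff ([:1, c:] * P + [:0, 1:] * [:1, -1:] * pderiv P) i
     = (if i = 0 then coeff P 0 else of_nat (Suc i) * coeff P i + (c + 1 - of_nat i) * coeff P (i - 1))"
proof (cases i)
  case 0 then show ?thesis by (simp add: coeff_pderiv)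
next
  case (Suc j)
  show ?thesis
  proof (cases j)
    case 0 then show ?thesis using Suc by (simp add: coeff_pderiv algebra_simps)
  next
    case (Suc l)
    then show ?thesis using \<open>i = Suc j\<close> by (simp add: coeff_pderiv algebra_simps)
  qed
qed

lemma Tr_E:
  assumes n: "n = Suc n'"
  shows "Tr n k ([:1, of_nat n':] * P + [:0, 1:] * [:1, -1:] * pderiv P) = int (k + 1) * Tr n' k P"
proof -
  let ?p = "coeff P"
  let ?C1 = "\<lambda>i. int ((k + Suc n' - i) choose Suc n')"
  let ?C0 = "\<lambda>i. int ((k + n' - i) choose Suc n')"
  have "Tr n k ([:1, of_nat n':] * P + [:0, 1:] * [:1, -1:] * pderiv P)
      = (\<Sum>i\<in>{0..k}. int (i + 1) * ?p i * ?C1 i + (if i = 0 then 0 else (int n' + 1 - int i) * ?p (i - 1) * ?C1 i))"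
    unfolding Tr_def n by (rule sum.cong[OF refl], subst coeff_E) (simp add: algebra_simps)
  also have "\<dots> = (\<Sum>i\<in>{0..k}. int (i + 1) * ?p i * ?C1 i) + (\<Sum>i\<in>{0..k}. if i = 0 then 0 else (int n' + 1 - int i) * ?p (i - 1) * ?C1 i)"
    by (rule sum.distrib)
  also have "(\<Sum>i\<in>{0..k}. if i = 0 then 0 else (int n' + 1 - int i) * ?p (i - 1) * ?C1 i)
      = (\<Sum>i\<in>{0..k}. (int n' - int i) * ?p i * ?C0 i)"
  proof -
    have "(\<Sum>i\<in>{0..k}. if i = 0 then 0 else (int n' + 1 - int i) * ?p (i - 1) * ?C1 i)
        = (\<Sum>i\<in>Suc ` {0..<k}. (int n' + 1 - int i) * ?p (i - 1) * ?C1 i)"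
    proof (rule sum.mono_neutral_cong_right)
      show "Suc ` {0..<k} \<subseteq> {0..k}" by auto
      show "\<forall>i\<in>{0..k} - Suc ` {0..<k}. (if i = 0 then 0 else (int n' + 1 - int i) * ?p (i - 1) * ?C1 i) = 0"
      proof
        fix i assume "i \<in> {0..k} - Suc ` {0..<k}"
        then have "i = 0" by (cases i) (auto simp: image_iff)
        then show "(if i = 0 then 0 else (int n' + 1 - int i) * ?p (i - 1) * ?C1 i) = 0" by simp
      qed
    qed auto
    also have "\<dots> = (\<Sum>j\<in>{0..<k}. (int n' + 1 - int (Suc j)) * ?p j * ?C1 (Suc j))"
      by (subst sum.reindex) auto
    also have "\<dots> = (\<Sum>j\<in>{0..<k}. (int n' - int j) * ?p j * ?C0 j)"
      by (rule sum.cong) auto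
    also have "\<dots> = (\<Sum>j\<in>{0..k}. (int n' - int j) * ?p j * ?C0 j)"
      by (rule sum.mono_neutral_left) (auto simp: binomial_eq_0)
    finally show ?thesis .
  qed
  also have "(\<Sum>i\<in>{0..k}. int (i + 1) * ?p i * ?C1 i) + (\<Sum>i\<in>{0..k}. (int n' - int i) * ?p i * ?C0 i)
      = (\<Sum>i\<in>{0..k}. ?p i * (int (i + 1) * ?C1 i + (int n' - int i) * ?C0 i))"
    by (simp add: sum.distrib[symmetric] algebra_simps)
  also have "\<dots> = (\<Sum>i\<in>{0..k}. ?p i * (int (k + 1) * int ((k + n' - i) choose n')))"
    by (rule sum.cong[OF refl]) (simp only: bin_key2 atLeastAtMost_iff)
  also have "\<dots> = int (k + 1) * Tr n' k P"
    unfolding Tr_def by (simp add: sum_distrib_left algebra_simps)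
  finally show ?thesis .
qed

lemma der_eq: "derangements n = {\<sigma>. \<sigma> permutes {1..n} \<and> fixc n \<sigma> = 0}"
  unfolding derangements_def fixc_def by auto

lemma Tr_D: "Tr n k (Dpoly n) = int (acnt k n 0)"
proof -
  have "Tr n k (Dpoly n) = (\<Sum>\<sigma>\<in>derangements n. Tr n k (monom 1 (des n \<sigma>)))"
    unfolding Dpoly_def by (rule Tr_sum)
  also have "\<dots> = (\<Sum>\<sigma>\<in>derangements n. int (w n k \<sigma>))"
  proof (rule sum.cong[OF refl])
    fix \<sigma> assume "\<sigma> \<in> derangements n"
    have "des n \<sigma> \<le> n" using des_le[of n \<sigma>] by simp
    then show "Tr n k (monom 1 (des n \<sigma>)) = int (w n k \<sigma>)" by (simp add: Tr_monom w_def)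
  qed
  also have "\<dots> = int (acnt k n 0)" unfolding acnt_def der_eq by simp
  finally show ?thesis .
qed

lemma main_rec:
  assumes n: "n = Suc n'"
  shows "Dpoly n = smult ((-1) ^ n) (monom 1 (n - 1))
            + [:1, of_nat (n - 1):] * Dpoly (n - 1)
            + [:0, 1:] * [:1, -1:] * pderiv (Dpoly (n - 1))"
proof -
  let ?A = "smult ((-1) ^ n) (monom 1 (n - 1)) :: int poly"
  let ?E = "[:1, of_nat n':] * Dpoly n' + [:0, 1:] * [:1, -1:] * pderiv (Dpoly n')"
  have "Tr n k (Dpoly n - (?A + ?E)) = 0" for k
  proof -
    have TA: "Tr n k ?A = (-1) ^ n * int ((k + 1) choose n)"
    proof -
      have "?A = monom ((-1) ^ n) (n - 1)" by (simp add: smult_monom)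
      moreover have "k + n - (n - 1) = k + 1" using n by simp
      ultimately show ?thesis by (simp add: Tr_monom)
    qed
    have TE: "Tr n k ?E = int (k + 1) * int (acnt k n' 0)"
      using Tr_E[OF n, of k "Dpoly n'"] by (simp add: Tr_D)
    have "Tr n k (Dpoly n - (?A + ?E)) = Tr n k (Dpoly n) - (Tr n k ?A + Tr n k ?E)"
      by (simp only: Tr_diff Tr_add)
    also have "\<dots> = int (acnt k n 0) - ((-1) ^ n * int ((k + 1) choose n) + int (k + 1) * int (acnt k n' 0))"
      by (simp only: TA TE Tr_D)
    finally show ?thesis using c_rec[where n=n and k=k] n by simp
  qed
  then have "Dpoly n - (?A + ?E) = 0" by (rule Tr_zero)
  then show ?thesis using n by (simp add: algebra_simps)
qed

lemma coeff_D_high: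
  assumes "1 \<le> m" "m \<le> i"
  shows "coeff (Dpoly m) i = 0"
proof -
  have "coeff (Dpoly m) i = (\<Sum>\<sigma>\<in>derangements m. coeff (monom 1 (des m \<sigma>)) i)"
    unfolding Dpoly_def by (rule coeff_sum)
  also have "\<dots> = 0"
  proof (rule sum.neutral, rule ballI)
    fix \<sigma> assume "\<sigma> \<in> derangements m"
    have "des m \<sigma> \<noteq> i" using des_le[of m \<sigma>] assms by simp
    then show "coeff (monom 1 (des m \<sigma>)) i = 0" by simp
  qed
  finally show ?thesis .
qed

lemma Dpoly_1: "Dpoly 1 = 0"
proof -
  have "derangements 1 = {}"
  proof (rule ccontr)
    assume "derangements 1 \<noteq> {}"
    then obtain \<sigma> :: "nat \<Rightarrow> nat" where s: "\<sigma> permutes {1..1}" "\<forall>i\<in>{1..1}. \<sigma> i \<noteq> i"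
      unfolding derangements_def by auto
    have "\<sigma> 1 \<in> {1..1}" by (rule permutes_in_image[OF s(1), THEN iffD2]) simp
    then show False using s(2) by simp
  qed
  then show ?thesis unfolding Dpoly_def by simp
qed

lemma Dpoly_Suc0: "Dpoly (Suc 0) = 0" using Dpoly_1 by simp

lemma coeff_R:
  assumes n: "n = Suc n'" and i: "i \<noteq> 0"
  shows "coeff (smult ((-1) ^ n) (monom 1 (n - 1)) + [:1, of_nat (n - 1):] * P
            + [:0, 1:] * [:1, -1:] * pderiv (P :: int poly)) i
       = (if i = n - 1 then (-1) ^ n else 0) + (of_nat (Suc i) * coeff P i + (of_nat n' + 1 - of_nat i) * coeff P (i - 1))"
proof -
  have nn: "n - 1 = n'" using n by simp
  have 1: "coeff (smult ((-1) ^ n) (monom 1 (n - 1)) + [:1, of_nat (n - 1):] * P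
            + [:0, 1:] * [:1, -1:] * pderiv P) i
      = coeff (smult ((-1) ^ n) (monom 1 (n - 1)) :: int poly) i + coeff ([:1, of_nat n':] * P + [:0, 1:] * [:1, -1:] * pderiv P) i"
    by (simp only: nn coeff_add add.assoc)
  have 2: "coeff ([:1, of_nat n':] * P + [:0, 1:] * [:1, -1:] * pderiv P) i
      = of_nat (Suc i) * coeff P i + (of_nat n' + 1 - of_nat i) * coeff P (i - 1)"
    using i by (subst coeff_E) simp
  have 3: "coeff (smult ((-1) ^ n) (monom 1 (n - 1)) :: int poly) i = (if i = n - 1 then (-1) ^ n else 0)"
    by simp
  show ?thesis by (simp only: 1 2 3)
qed

lemma top_coeff: "1 \<le> n \<Longrightarrow> coeff (Dpoly n) (n - 1) = (if even n then 1 else 0)"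
proof (induction n rule: nat_induct_at_least)
  case base then show ?case by (simp add: Dpoly_Suc0)
next
  case (Suc m)
  have R: "Dpoly (Suc m) = smult ((-1) ^ Suc m) (monom 1 (Suc m - 1)) + [:1, of_nat (Suc m - 1):] * Dpoly (Suc m - 1)
      + [:0, 1:] * [:1, -1:] * pderiv (Dpoly (Suc m - 1))"
    by (rule main_rec) simp
  have "coeff (Dpoly (Suc m)) m = (if m = Suc m - 1 then (-1) ^ Suc m else 0)
     + (of_nat (Suc m) * coeff (Dpoly (Suc m - 1)) m + (of_nat m + 1 - of_nat m) * coeff (Dpoly (Suc m - 1)) (m - 1))"
    unfolding R by (rule coeff_R) (use Suc.hyps in auto)
  then have "coeff (Dpoly (Suc m)) m = (-1) ^ Suc m + (of_nat (Suc m) * coeff (Dpoly m) m + coeff (Dpoly m) (m - 1))"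
    by simp
  also have "coeff (Dpoly m) m = 0" using coeff_D_high[of m m] Suc.hyps by simp
  finally show ?case using Suc.IH by simp
qed

theorem lemma4p1:
  fixes n :: nat
  assumes "n \<ge> 3"
  shows "Dpoly n = smult ((-1) ^ n) (monom 1 (n - 1))
            + [:1, of_nat (n - 1):] * Dpoly (n - 1)
            + [:0, 1:] * [:1, -1:] * pderiv (Dpoly (n - 1))
       \<and> coeff (Dpoly n) (n - 1) = (if even n then 1 else 0)
       \<and> (\<forall>k. k \<ge> 1 \<and> k \<noteq> n - 1 \<longrightarrow>
           coeff (Dpoly n) k = of_nat (k + 1) * coeff (Dpoly (n - 1)) k
                               + of_nat (n - k) * coeff (Dpoly (n - 1)) (k - 1))"
proof -
  obtain n' where n: "n = Suc n'" using assms by (cases n) auto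
  have n2: "n' \<ge> 2" using assms n by simp
  have A: "Dpoly n = smult ((-1) ^ n) (monom 1 (n - 1))
            + [:1, of_nat (n - 1):] * Dpoly (n - 1)
            + [:0, 1:] * [:1, -1:] * pderiv (Dpoly (n - 1))"
    by (rule main_rec[OF n])
  have B: "coeff (Dpoly n) (n - 1) = (if even n then 1 else 0)"
    using top_coeff[of n] assms by simp
  have C: "coeff (Dpoly n) k = of_nat (k + 1) * coeff (Dpoly (n - 1)) k
                               + of_nat (n - k) * coeff (Dpoly (n - 1)) (k - 1)"
    if k: "k \<ge> 1" "k \<noteq> n - 1" for k
  proof -
    have "coeff (Dpoly n) k = coeff (smult ((-1) ^ n) (monom 1 (n - 1))
            + [:1, of_nat (n - 1):] * Dpoly (n - 1)
            + [:0, 1:] * [:1, -1:] * pderiv (Dpoly (n - 1))) k"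
      using A by (rule arg_cong)
    also have "\<dots> = (if k = n - 1 then (-1) ^ n else 0)
        + (of_nat (Suc k) * coeff (Dpoly (n - 1)) k + (of_nat n' + 1 - of_nat k) * coeff (Dpoly (n - 1)) (k - 1))"
      by (rule coeff_R[OF n]) (use k in simp)
    also have "\<dots> = of_nat (Suc k) * coeff (Dpoly (n - 1)) k + (of_nat n' + 1 - of_nat k) * coeff (Dpoly (n - 1)) (k - 1)"
      using k by simp
    also have "(of_nat n' + 1 - of_nat k) * coeff (Dpoly (n - 1)) (k - 1) = of_nat (n - k) * coeff (Dpoly (n - 1)) (k - 1)"
    proof (cases "k \<le> n")
      case True
      then have "(of_nat n' + 1 - of_nat k :: int) = of_nat (n - k)" using n by (simp add: of_nat_diff)
      then show ?thesis by simp
    next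
      case False
      have "coeff (Dpoly (n - 1)) (k - 1) = 0" using coeff_D_high[of "n - 1" "k - 1"] n2 n False by simp
      then show ?thesis by simp
    qed
    finally show ?thesis by simp
  qed
  show ?thesis using A B C by blast
qed

end
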